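(* Let $D=\operatorname{diag}(d_1,\dots,d_n)$ with $d_i>0$, and let $L\in\mathbb{R}^{N\times N}$ be symmetric with nonpositive off-diagonal entries and $L\mathbf{1}=0$. Then for every $1\le p\le\infty$, $M^+_p[-L\otimes D]=0$.
   Context: $M^+_p[f]$ denotes the strong least upper bound logarithmic Lipschitz constant on $\mathbb{R}^{nN}$ induced by the standard $p$-norm: $M^+_p[f]=\sup_{u\neq v}\lim_{h\to0^+}\frac1h\left(\frac{\|u-v+h(f(u)-f(v))\|_p}{\|u-v\|_p}-1\right)$; here the linear map $u\mapsto-(L\otimes D)u$. $\otimes$ is the Kronecker product and $\mathbf{1}=(1,\dots,1)^T$. *)

theory Defs
  imports Complex_Main "HOL-Library.Extended_Real"
begin

definition rvec :: "nat \<Rightarrow> (nat \<Rightarrow> real) set" where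
  "rvec m = {x. \<forall>i\<ge>m. x i = 0}"

definition pnorm :: "ereal \<Rightarrow> nat \<Rightarrow> (nat \<Rightarrow> real) \<Rightarrow> real" where
  "pnorm p m x =
     (if p = \<infinity> then Max (insert 0 ((\<lambda>i. \<bar>x i\<bar>) ` {..<m}))
      else (\<Sum>i<m. \<bar>x i\<bar> powr real_of_ereal p) powr (1 / real_of_ereal p))"

definition logLip_sup :: "ereal \<Rightarrow> nat \<Rightarrow> ((nat \<Rightarrow> real) \<Rightarrow> (nat \<Rightarrow> real)) \<Rightarrow> ereal" where
  "logLip_sup p m f =
     (SUP uv \<in> {(u, v). u \<in> rvec m \<and> v \<in> rvec m \<and> u \<noteq> v}.
        ereal (Lim (at_right 0)
          (\<lambda>h. (pnorm p m (\<lambda>i. fst uv i - snd uv i + h * (f (fst uv) i - f (snd uv) i))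
                 / pnorm p m (\<lambda>i. fst uv i - snd uv i) - 1) / h)))"

definition mat_vec :: "nat \<Rightarrow> (nat \<Rightarrow> nat \<Rightarrow> real) \<Rightarrow> (nat \<Rightarrow> real) \<Rightarrow> (nat \<Rightarrow> real)" where
  "mat_vec m A u = (\<lambda>k. if k < m then (\<Sum>l<m. A k l * u l) else 0)"

text \<open>Kronecker product of an N x N matrix L and an n x n matrix D (an (N n) x (N n) matrix),
  with the standard index convention: row (i, a) is index i * n + a.\<close>
definition kron :: "nat \<Rightarrow> (nat \<Rightarrow> nat \<Rightarrow> real) \<Rightarrow> (nat \<Rightarrow> nat \<Rightarrow> real) \<Rightarrow> (nat \<Rightarrow> nat \<Rightarrow> real)" where
  "kron n L D = (\<lambda>k l. L (k div n) (l div n) * D (k mod n) (l mod n))"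

definition diag_mat :: "(nat \<Rightarrow> real) \<Rightarrow> (nat \<Rightarrow> nat \<Rightarrow> real)" where
  "diag_mat d = (\<lambda>a b. if a = b then d a else 0)"

end

theory Submission
  imports Defs "HOL-Analysis.Analysis"
begin

lemma powr_convex0:
  assumes r: "(r::real) \<ge> 1"
  shows "convex_on {0..} (\<lambda>x::real. x powr r)"
proof (rule convex_onI)
  fix t x y :: real
  assume t: "0 < t" "t < 1" and x: "x \<in> {0..}" and y: "y \<in> {0..}"
  show "((1 - t) *\<^sub>R x + t *\<^sub>R y) powr r \<le> (1 - t) * x powr r + t * y powr r"
  proof (cases "x = 0 \<or> y = 0")
    case False
    then have "x \<in> {0<..}" "y \<in> {0<..}" using x y by auto
    then show ?thesis using convex_onD[OF powr_convex[OF r], of t x y] t by auto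
  next
    case True
    have key: "\<And>s z::real. 0 < s \<Longrightarrow> s < 1 \<Longrightarrow> 0 \<le> z \<Longrightarrow> (s * z) powr r \<le> s * z powr r"
    proof -
      fix s z :: real assume s: "0 < s" "s < 1" and z: "0 \<le> z"
      have "(s*z) powr r = s powr r * z powr r" using s z by (simp add: powr_mult)
      also have "s powr r \<le> s powr 1" using s r by (intro powr_mono') auto
      then have "s powr r * z powr r \<le> s * z powr r" using s by (intro mult_right_mono) auto
      finally show "(s * z) powr r \<le> s * z powr r" .
    qed
    show ?thesis
    proof (cases "x = 0")
      case True
      then show ?thesis using key[of t y] t y r by auto
    next
      case False
      then have "y = 0" using \<open>x = 0 \<or> y = 0\<close> by auto
      then show ?thesis using key[of "1-t" x] t x r by auto
    qed
  qed
qed (simp add: convex_real_interval)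

lemma jensen_powr:
  fixes a y :: "'i \<Rightarrow> real"
  assumes "finite S" "(\<Sum>i\<in>S. a i) = 1" "\<And>i. i \<in> S \<Longrightarrow> a i \<ge> 0"
    "\<And>i. i \<in> S \<Longrightarrow> y i \<ge> 0" "(r::real) \<ge> 1"
  shows "(\<Sum>i\<in>S. a i * y i) powr r \<le> (\<Sum>i\<in>S. a i * y i powr r)"
proof -
  have "S \<noteq> {}" using assms(2) by auto
  from convex_on_sum[OF assms(1) this powr_convex0[OF assms(5)] assms(2) assms(3), of y] assms(4)
  show ?thesis by auto
qed

definition pn :: "real \<Rightarrow> nat \<Rightarrow> (nat \<Rightarrow> real) \<Rightarrow> real" where
  "pn r m x = (\<Sum>i<m. \<bar>x i\<bar> powr r) powr (1 / r)"

definition mx :: "nat \<Rightarrow> (nat \<Rightarrow> real) \<Rightarrow> real" where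
  "mx m x = Max (insert 0 ((\<lambda>i. \<bar>x i\<bar>) ` {..<m}))"

lemma mx_ge: "i < m \<Longrightarrow> \<bar>x i\<bar> \<le> mx m x"
  unfolding mx_def by (intro Max_ge) auto

lemma mx_nonneg: "0 \<le> mx m x"
  unfolding mx_def by (intro Max_ge) auto

lemma mx_le: "(\<And>i. i < m \<Longrightarrow> \<bar>x i\<bar> \<le> c) \<Longrightarrow> 0 \<le> c \<Longrightarrow> mx m x \<le> c"
  unfolding mx_def by (subst Max_le_iff) auto

lemma mx_tri: "mx m (\<lambda>i. x i + y i) \<le> mx m x + mx m y"
  by (intro mx_le) (auto intro: add_mono mx_ge mx_nonneg abs_triangle_ineq order_trans add_nonneg_nonneg)

lemma mx_scale: "0 \<le> c \<Longrightarrow> mx m (\<lambda>i. c * x i) \<le> c * mx m x"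
  using mx_nonneg[of m x] by (intro mx_le) (auto simp: abs_mult intro: mult_left_mono mx_ge)

lemma mx_pos: "i < m \<Longrightarrow> x i \<noteq> 0 \<Longrightarrow> 0 < mx m x"
  using mx_ge[of i m x] by auto

lemma pn_nonneg: "0 \<le> pn r m x"
  unfolding pn_def by simp

lemma pn_pos: "i < m \<Longrightarrow> x i \<noteq> 0 \<Longrightarrow> 0 < pn r m x"
proof -
  assume "i < m" "x i \<noteq> 0"
  then have "0 < \<bar>x i\<bar> powr r" by simp
  also have "\<dots> \<le> (\<Sum>i<m. \<bar>x i\<bar> powr r)"
    using \<open>i < m\<close> by (intro member_le_sum) auto
  finally show ?thesis unfolding pn_def by simp
qed

lemma pn_pow: "r \<ge> 1 \<Longrightarrow> pn r m x powr r = (\<Sum>i<m. \<bar>x i\<bar> powr r)"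
  unfolding pn_def by (simp add: powr_powr sum_nonneg)

lemma pn_scale: "r \<ge> 1 \<Longrightarrow> 0 \<le> c \<Longrightarrow> pn r m (\<lambda>i. c * x i) = c * pn r m x"
proof -
  assume r: "r \<ge> 1" and c: "0 \<le> c"
  have "(\<Sum>i<m. \<bar>c * x i\<bar> powr r) = c powr r * (\<Sum>i<m. \<bar>x i\<bar> powr r)"
    using c by (simp add: abs_mult powr_mult sum_distrib_left)
  then have "pn r m (\<lambda>i. c * x i) = (c powr r) powr (1/r) * pn r m x"
    unfolding pn_def using c by (simp add: powr_mult sum_nonneg)
  also have "(c powr r) powr (1/r) = c" using r c by (simp add: powr_powr)
  finally show ?thesis .
qed

lemma pn_zero:
  assumes r: "r \<ge> 1" and z: "pn r m x = 0" and i: "i < m"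
  shows "x i = 0"
proof (rule ccontr)
  assume "x i \<noteq> 0"
  from pn_pos[of i m x r] i \<open>x i \<noteq> 0\<close> z show False by simp
qed

lemma pn_cong: "(\<And>i. i < m \<Longrightarrow> x i = y i) \<Longrightarrow> pn r m x = pn r m y"
  unfolding pn_def by (intro arg_cong[where f="\<lambda>s. s powr _"] sum.cong) auto

lemma mx_cong: "(\<And>i. i < m \<Longrightarrow> x i = y i) \<Longrightarrow> mx m x = mx m y"
  unfolding mx_def by (intro arg_cong[where f="\<lambda>s. Max (insert 0 s)"] image_cong) auto

lemma pn_tri:
  assumes r: "r \<ge> 1"
  shows "pn r m (\<lambda>i. x i + y i) \<le> pn r m x + pn r m y"
proof -
  define a where "a = pn r m x"
  define b where "b = pn r m y"
  have a0: "a \<ge> 0" and b0: "b \<ge> 0" unfolding a_def b_def by (auto intro: pn_nonneg)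
  show ?thesis
  proof (cases "a = 0 \<or> b = 0")
    case True
    then show ?thesis
    proof
      assume "a = 0"
      then have "\<And>i. i < m \<Longrightarrow> x i + y i = y i" using pn_zero[OF r] unfolding a_def by auto
      then have "pn r m (\<lambda>i. x i + y i) = pn r m y" by (rule pn_cong)
      then show ?thesis using \<open>a = 0\<close> unfolding a_def by simp
    next
      assume "b = 0"
      then have "\<And>i. i < m \<Longrightarrow> x i + y i = x i" using pn_zero[OF r] unfolding b_def by auto
      then have "pn r m (\<lambda>i. x i + y i) = pn r m x" by (rule pn_cong)
      then show ?thesis using \<open>b = 0\<close> unfolding b_def by simp
    qed
  next
    case False
    then have a: "a > 0" and b: "b > 0" using a0 b0 by auto
    define t where "t = b / (a + b)"
    have t: "0 \<le> t" "t \<le> 1" using a b unfolding t_def by auto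
    have ar: "a powr r = (\<Sum>i<m. \<bar>x i\<bar> powr r)" unfolding a_def by (rule pn_pow[OF r])
    have br: "b powr r = (\<Sum>i<m. \<bar>y i\<bar> powr r)" unfolding b_def by (rule pn_pow[OF r])
    have pt: "\<bar>x i + y i\<bar> powr r \<le> (a + b) powr r *
        ((1 - t) * (\<bar>x i\<bar> powr r / a powr r) + t * (\<bar>y i\<bar> powr r / b powr r))" for i
    proof -
      have eq: "\<bar>x i\<bar> + \<bar>y i\<bar> = (a + b) * ((1 - t) * (\<bar>x i\<bar> / a) + t * (\<bar>y i\<bar> / b))"
      proof -
        have h1: "(a+b)*(1-t) = a" and h2: "(a+b)*t = b" using a b unfolding t_def by (auto simp: field_simps)
        have "(a + b) * ((1 - t) * (\<bar>x i\<bar> / a) + t * (\<bar>y i\<bar> / b))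
           = ((a+b)*(1-t)) * (\<bar>x i\<bar> / a) + ((a+b)*t) * (\<bar>y i\<bar> / b)" by (simp only: distrib_left mult.assoc)
        then show ?thesis unfolding h1 h2 using a b by simp
      qed
      have "\<bar>x i + y i\<bar> powr r \<le> (\<bar>x i\<bar> + \<bar>y i\<bar>) powr r"
        using r by (intro powr_mono2) auto
      also have "\<dots> = (a + b) powr r * ((1 - t) * (\<bar>x i\<bar> / a) + t * (\<bar>y i\<bar> / b)) powr r"
        unfolding eq using a b t by (intro powr_mult)
      also have "\<dots> \<le> (a + b) powr r * ((1 - t) * (\<bar>x i\<bar> / a) powr r + t * (\<bar>y i\<bar> / b) powr r)"
        using convex_onD[OF powr_convex0[OF r], of t "\<bar>x i\<bar> / a" "\<bar>y i\<bar> / b"] t a b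
        by (intro mult_left_mono) auto
      also have "(\<bar>x i\<bar> / a) powr r = \<bar>x i\<bar> powr r / a powr r" using a by (simp add: powr_divide)
      also have "(\<bar>y i\<bar> / b) powr r = \<bar>y i\<bar> powr r / b powr r" using b by (simp add: powr_divide)
      finally show ?thesis .
    qed
    have "(\<Sum>i<m. \<bar>x i + y i\<bar> powr r) \<le> (\<Sum>i<m. (a + b) powr r *
        ((1 - t) * (\<bar>x i\<bar> powr r / a powr r) + t * (\<bar>y i\<bar> powr r / b powr r)))"
      by (intro sum_mono pt)
    also have "\<dots> = (a + b) powr r * ((1 - t) * ((\<Sum>i<m. \<bar>x i\<bar> powr r) / a powr r)
        + t * ((\<Sum>i<m. \<bar>y i\<bar> powr r) / b powr r))"
      by (simp add: sum_distrib_left sum_distrib_right sum.distrib sum_divide_distrib algebra_simps)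
    also have "\<dots> = (a + b) powr r" unfolding ar[symmetric] br[symmetric] using a b by simp
    finally have "(\<Sum>i<m. \<bar>x i + y i\<bar> powr r) powr (1/r) \<le> ((a + b) powr r) powr (1/r)"
      using r by (intro powr_mono2) (auto intro: sum_nonneg)
    also have "((a + b) powr r) powr (1/r) = a + b" using a b r by (simp add: powr_powr)
    finally show ?thesis unfolding pn_def a_def b_def .
  qed
qed

lemma pn_contract:
  fixes P :: "nat \<Rightarrow> nat \<Rightarrow> real"
  assumes r: "r \<ge> 1"
    and P0: "\<And>k l. k < m \<Longrightarrow> l < m \<Longrightarrow> P k l \<ge> 0"
    and row: "\<And>k. k < m \<Longrightarrow> (\<Sum>l<m. P k l) = 1"
    and col: "\<And>l. l < m \<Longrightarrow> (\<Sum>k<m. P k l) = 1"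
  shows "pn r m (\<lambda>k. \<Sum>l<m. P k l * w l) \<le> pn r m w"
proof -
  have pt: "\<bar>\<Sum>l<m. P k l * w l\<bar> powr r \<le> (\<Sum>l<m. P k l * \<bar>w l\<bar> powr r)" if k: "k < m" for k
  proof -
    have "\<bar>\<Sum>l<m. P k l * w l\<bar> \<le> (\<Sum>l<m. \<bar>P k l * w l\<bar>)" by (rule sum_abs)
    also have "\<dots> = (\<Sum>l<m. P k l * \<bar>w l\<bar>)" using P0 k by (intro sum.cong) (auto simp: abs_mult)
    finally have "\<bar>\<Sum>l<m. P k l * w l\<bar> powr r \<le> (\<Sum>l<m. P k l * \<bar>w l\<bar>) powr r"
      using r by (intro powr_mono2) auto
    also have "\<dots> \<le> (\<Sum>l<m. P k l * \<bar>w l\<bar> powr r)"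
      using P0 k row[OF k] r by (intro jensen_powr) auto
    finally show ?thesis .
  qed
  have "(\<Sum>k<m. \<bar>\<Sum>l<m. P k l * w l\<bar> powr r) \<le> (\<Sum>k<m. \<Sum>l<m. P k l * \<bar>w l\<bar> powr r)"
    by (intro sum_mono pt) auto
  also have "\<dots> = (\<Sum>l<m. \<Sum>k<m. P k l * \<bar>w l\<bar> powr r)" by (rule sum.swap)
  also have "\<dots> = (\<Sum>l<m. \<bar>w l\<bar> powr r)"
    by (intro sum.cong) (auto simp: sum_distrib_right[symmetric] col)
  finally show ?thesis unfolding pn_def using r by (intro powr_mono2) (auto intro: sum_nonneg)
qed

lemma mx_contract:
  fixes P :: "nat \<Rightarrow> nat \<Rightarrow> real"
  assumes P0: "\<And>k l. k < m \<Longrightarrow> l < m \<Longrightarrow> P k l \<ge> 0"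
    and row: "\<And>k. k < m \<Longrightarrow> (\<Sum>l<m. P k l) = 1"
  shows "mx m (\<lambda>k. \<Sum>l<m. P k l * w l) \<le> mx m w"
proof (rule mx_le)
  fix k assume k: "k < m"
  have "\<bar>\<Sum>l<m. P k l * w l\<bar> \<le> (\<Sum>l<m. \<bar>P k l * w l\<bar>)" by (rule sum_abs)
  also have "\<dots> \<le> (\<Sum>l<m. P k l * mx m w)"
    using P0 k by (intro sum_mono) (auto simp: abs_mult intro: mult_left_mono mx_ge)
  also have "\<dots> = mx m w" using row[OF k] by (simp add: sum_distrib_right[symmetric])
  finally show "\<bar>\<Sum>l<m. P k l * w l\<bar> \<le> mx m w" .
qed (rule mx_nonneg)

lemma pnorm_fin:
  assumes "1 \<le> p" "p \<noteq> \<infinity>"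
  shows "pnorm p m x = pn (real_of_ereal p) m x" and "real_of_ereal p \<ge> 1"
  using assms by (auto simp: pnorm_def pn_def) (cases p; auto)

lemma pnorm_inf: "pnorm \<infinity> m x = mx m x"
  by (simp add: pnorm_def mx_def)

lemma pnorm_nonneg: "1 \<le> p \<Longrightarrow> 0 \<le> pnorm p m x"
  by (cases "p = \<infinity>") (auto simp: pnorm_fin pnorm_inf pn_nonneg mx_nonneg)

lemma pnorm_pos: "1 \<le> p \<Longrightarrow> i < m \<Longrightarrow> x i \<noteq> 0 \<Longrightarrow> 0 < pnorm p m x"
  by (cases "p = \<infinity>") (auto simp: pnorm_fin pnorm_inf intro: pn_pos mx_pos)

lemma pnorm_cong: "1 \<le> p \<Longrightarrow> (\<And>i. i < m \<Longrightarrow> x i = y i) \<Longrightarrow> pnorm p m x = pnorm p m y"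
  by (cases "p = \<infinity>") (auto simp: pnorm_fin pnorm_inf intro: pn_cong mx_cong)

lemma pnorm_tri: "1 \<le> p \<Longrightarrow> pnorm p m (\<lambda>i. x i + y i) \<le> pnorm p m x + pnorm p m y"
  by (cases "p = \<infinity>") (auto simp: pnorm_fin pnorm_inf intro: pn_tri mx_tri)

lemma pnorm_scale: "1 \<le> p \<Longrightarrow> 0 \<le> c \<Longrightarrow> pnorm p m (\<lambda>i. c * x i) \<le> c * pnorm p m x"
  by (cases "p = \<infinity>") (auto simp: pnorm_fin pnorm_inf pn_scale intro: mx_scale)

lemma pnorm_contract:
  fixes P :: "nat \<Rightarrow> nat \<Rightarrow> real"
  assumes "1 \<le> p"
    and "\<And>k l. k < m \<Longrightarrow> l < m \<Longrightarrow> P k l \<ge> 0"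
    and "\<And>k. k < m \<Longrightarrow> (\<Sum>l<m. P k l) = 1"
    and "\<And>l. l < m \<Longrightarrow> (\<Sum>k<m. P k l) = 1"
  shows "pnorm p m (\<lambda>k. \<Sum>l<m. P k l * w l) \<le> pnorm p m w"
  using assms by (cases "p = \<infinity>") (auto simp: pnorm_fin pnorm_inf intro: pn_contract mx_contract)

lemma quot_lim:
  assumes p: "1 \<le> p" and w: "0 < pnorm p m w"
  shows "((\<lambda>h. (pnorm p m (\<lambda>i. w i + h * v i) / pnorm p m w - 1) / h) \<longlongrightarrow>
     Inf ((\<lambda>h. (pnorm p m (\<lambda>i. w i + h * v i) / pnorm p m w - 1) / h) ` {0<..})) (at_right 0)"
proof -
  define N where "N = pnorm p m"
  define D where "D = N w"
  define q where "q = (\<lambda>h. (N (\<lambda>i. w i + h * v i) / D - 1) / h)"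
  have D: "D > 0" using w unfolding D_def N_def by simp
  have mono: "q a \<le> q b" if a: "0 < a" and ab: "a \<le> b" for a b
  proof -
    define t where "t = a / b"
    have b: "b > 0" using a ab by simp
    have t: "0 < t" "t \<le> 1" using a b ab unfolding t_def by auto
    have eq: "(\<lambda>i. w i + a * v i) = (\<lambda>i. (1 - t) * w i + t * (w i + b * v i))"
      using b unfolding t_def by (auto simp: field_simps)
    have "N (\<lambda>i. w i + a * v i) \<le> N (\<lambda>i. (1 - t) * w i) + N (\<lambda>i. t * (w i + b * v i))"
      unfolding eq N_def by (rule pnorm_tri[OF p])
    also have "\<dots> \<le> (1 - t) * D + t * N (\<lambda>i. w i + b * v i)"
      unfolding D_def N_def using t by (intro add_mono pnorm_scale[OF p]) auto
    finally have ineq: "N (\<lambda>i. w i + a * v i) - D \<le> (a / b) * (N (\<lambda>i. w i + b * v i) - D)"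
      unfolding t_def by (simp add: algebra_simps)
    then have "(N (\<lambda>i. w i + a * v i) - D) / (D * a) \<le> ((a / b) * (N (\<lambda>i. w i + b * v i) - D)) / (D * a)"
      using D a by (intro divide_right_mono) auto
    also have "\<dots> = (N (\<lambda>i. w i + b * v i) - D) / (D * b)" using D a b by (simp add: field_simps)
    finally show ?thesis unfolding q_def using D a b by (simp add: field_simps)
  qed
  have bnd: "-(N (\<lambda>i. - v i) / D) \<le> q h" if h: "0 < h" for h
  proof -
    have "N w \<le> N (\<lambda>i. (w i + h * v i) + h * (- v i))" by simp
    also have "\<dots> \<le> N (\<lambda>i. w i + h * v i) + N (\<lambda>i. h * (- v i))"
      unfolding N_def by (rule pnorm_tri[OF p])
    also have "N (\<lambda>i. h * (- v i)) \<le> h * N (\<lambda>i. - v i)"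
      unfolding N_def using h by (intro pnorm_scale[OF p]) auto
    finally have "- h * N (\<lambda>i. - v i) \<le> N (\<lambda>i. w i + h * v i) - D" unfolding D_def by simp
    then have "(- h * N (\<lambda>i. - v i)) / (D * h) \<le> (N (\<lambda>i. w i + h * v i) - D) / (D * h)"
      using D h by (intro divide_right_mono) auto
    then show ?thesis unfolding q_def using D h by (simp add: field_simps)
  qed
  have "(q \<longlongrightarrow> Inf (q ` ({0<..} \<inter> UNIV))) (at 0 within ({0<..} \<inter> UNIV))"
    by (rule Lim_right_bound[where K="-(N (\<lambda>i. - v i) / D)"]) (auto intro: mono bnd)
  then show ?thesis unfolding q_def N_def D_def by simp
qed

lemma mat_vec_diff: "mat_vec m A u i - mat_vec m A v i = mat_vec m A (\<lambda>j. u j - v j) i"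
  unfolding mat_vec_def by (simp add: sum_subtractf right_diff_distrib)

lemma interval_divmod:
  assumes n: "0 < (n::nat)" and l: "l \<in> {j*n..<j*n+n}"
  shows "l div n = j" "l mod n = l - j * n"
proof -
  obtain b where b: "l = j*n + b" "b < n" using l by (metis atLeastLessThan_iff le_Suc_ex nat_add_left_cancel_less)
  then show "l div n = j" "l mod n = l - j * n" using n by auto
qed

theorem proposition4:
  fixes n N :: nat and d :: "nat \<Rightarrow> real" and L :: "nat \<Rightarrow> nat \<Rightarrow> real" and p :: ereal
  assumes "n \<ge> 1" and "N \<ge> 1"
    and "\<And>a. a < n \<Longrightarrow> d a > 0"
    and "\<And>i j. i < N \<Longrightarrow> j < N \<Longrightarrow> L i j = L j i"
    and "\<And>i j. i < N \<Longrightarrow> j < N \<Longrightarrow> i \<noteq> j \<Longrightarrow> L i j \<le> 0"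
    and "\<And>i. i < N \<Longrightarrow> (\<Sum>j<N. L i j) = 0"
    and "1 \<le> p"
  shows "logLip_sup p (N * n) (\<lambda>u. mat_vec (N * n) (\<lambda>k l. - kron n L (diag_mat d) k l) u) = 0"
proof -
  note n = assms(1) and NN = assms(2) and dpos = assms(3) and Lsym = assms(4) and Loff = assms(5)
    and Lrow = assms(6) and p = assms(7)
  define m where "m = N * n"
  define A where "A = (\<lambda>k l. - kron n L (diag_mat d) k l)"
  have Akl: "A k l = - (L (k div n) (l div n) * (if k mod n = l mod n then d (k mod n) else 0))" for k l
    by (simp add: A_def kron_def diag_mat_def)
  have divlt: "k div n < N" if "k < m" for k
    using that n unfolding m_def by (simp add: less_mult_imp_div_less)
  have modlt: "k mod n < n" for k using n by simp
  have m1: "m \<ge> 1" using n NN unfolding m_def by simp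
  have Asym: "A k l = A l k" if "k < m" "l < m" for k l
    unfolding Akl using Lsym[OF divlt[OF that(1)] divlt[OF that(2)]] by auto
  have Aoff: "A k l \<ge> 0" if "k < m" "l < m" "k \<noteq> l" for k l
  proof (cases "k mod n = l mod n")
    case True
    then have "k div n \<noteq> l div n" using that(3) by (metis div_mod_decomp)
    then have "L (k div n) (l div n) \<le> 0" using Loff divlt that by auto
    moreover have "d (k mod n) > 0" using dpos modlt by auto
    ultimately show ?thesis unfolding Akl using True by (simp add: mult_nonpos_nonneg)
  qed (simp add: Akl)
  have Arow: "(\<Sum>l<m. A k l) = 0" if k: "k < m" for k
  proof -
    define i where "i = k div n"
    define a where "a = k mod n"
    have "(\<Sum>l<m. A k l) = (\<Sum>j<N. \<Sum>l\<in>{j*n..<j*n+n}. A k l)"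
      unfolding m_def by (rule sum.nat_group[symmetric])
    also have "\<dots> = (\<Sum>j<N. - (L i j * d a))"
    proof (intro sum.cong refl)
      fix j assume "j \<in> {..<N}"
      have "(\<Sum>l\<in>{j*n..<j*n+n}. A k l) = (\<Sum>l\<in>{j*n..<j*n+n}. if l = j*n + a then - (L i j * d a) else 0)"
      proof (intro sum.cong refl)
        fix l assume l: "l \<in> {j*n..<j*n+n}"
        have nn: "0 < n" using n by simp
        note dm = interval_divmod[OF nn l]
        have "(a = l mod n) = (l = j*n + a)" using dm l by auto
        then show "A k l = (if l = j*n + a then - (L i j * d a) else 0)"
          unfolding Akl i_def[symmetric] a_def[symmetric] dm(1) by auto
      qed
      also have "\<dots> = - (L i j * d a)" using modlt[of k] unfolding a_def by (subst sum.delta) auto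
      finally show "(\<Sum>l\<in>{j*n..<j*n+n}. A k l) = - (L i j * d a)" .
    qed
    also have "\<dots> = - (d a * (\<Sum>j<N. L i j))" by (simp add: sum_distrib_left sum_negf mult.commute)
    also have "\<dots> = 0" using Lrow divlt[OF k] unfolding i_def by simp
    finally show ?thesis .
  qed
  have Acol: "(\<Sum>k<m. A k l) = 0" if l: "l < m" for l
    using Arow[OF l] Asym l by (metis (no_types, lifting) lessThan_iff sum.cong)
  define f where "f = (\<lambda>u. mat_vec m A u)"
  define S where "S = (\<Sum>k<m. \<bar>A k k\<bar>)"
  have S0: "S \<ge> 0" unfolding S_def by (simp add: sum_nonneg)
  define h0 where "h0 = 1 / (1 + S)"
  have h0: "h0 > 0" unfolding h0_def using S0 by simp
  have contr: "pnorm p m (\<lambda>i. w i + h * mat_vec m A w i) \<le> pnorm p m w" if h: "0 < h" "h < h0" for w h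
  proof -
    define P where "P = (\<lambda>k l. (if k = l then 1 else 0) + h * A k l)"
    have "pnorm p m (\<lambda>i. w i + h * mat_vec m A w i) = pnorm p m (\<lambda>k. \<Sum>l<m. P k l * w l)"
    proof (rule pnorm_cong[OF p])
      fix k assume k: "k < m"
      have "(\<Sum>l<m. P k l * w l) = (\<Sum>l<m. (if k = l then w l else 0)) + h * (\<Sum>l<m. A k l * w l)"
      proof -
        have "(\<Sum>l<m. P k l * w l) = (\<Sum>l<m. (if k = l then w l else 0) + h * (A k l * w l))"
          by (intro sum.cong) (auto simp: P_def algebra_simps)
        then show ?thesis by (simp add: sum.distrib sum_distrib_left)
      qed
      also have "\<dots> = w k + h * (\<Sum>l<m. A k l * w l)" using k by simp
      finally show "w k + h * mat_vec m A w k = (\<Sum>l<m. P k l * w l)" using k by (simp add: mat_vec_def)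
    qed
    also have "\<dots> \<le> pnorm p m w"
    proof (rule pnorm_contract[OF p])
      fix k l assume k: "k < m" and l: "l < m"
      show "0 \<le> P k l"
      proof (cases "k = l")
        case True
        have "\<bar>A k k\<bar> \<le> S" unfolding S_def using k by (intro member_le_sum) auto
        then have "h * \<bar>A k k\<bar> \<le> h * (1 + S)" using h by (intro mult_left_mono) auto
        also have "h * (1 + S) < 1" using h S0 unfolding h0_def by (simp add: field_simps)
        finally have "h * \<bar>A k k\<bar> < 1" .
        moreover have "h * (- A k k) \<le> h * \<bar>A k k\<bar>" using h by (intro mult_left_mono) auto
        ultimately have "- (h * A k k) < 1" by simp
        then show ?thesis unfolding P_def using True by simp
      next
        case False
        then show ?thesis unfolding P_def using Aoff[OF k l False] h by simp
      qed
    next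
      fix k assume k: "k < m"
      show "(\<Sum>l<m. P k l) = 1"
        unfolding P_def using k Arow[OF k] by (simp add: sum.distrib sum_distrib_left[symmetric])
    next
      fix l assume l: "l < m"
      show "(\<Sum>k<m. P k l) = 1"
        unfolding P_def using l Acol[OF l] by (simp add: sum.distrib sum_distrib_left[symmetric])
    qed
    finally show ?thesis .
  qed
  have upper: "Lim (at_right 0) (\<lambda>h. (pnorm p m (\<lambda>i. u i - v i + h * (f u i - f v i))
                 / pnorm p m (\<lambda>i. u i - v i) - 1) / h) \<le> 0"
    if uv: "u \<in> rvec m" "v \<in> rvec m" "u \<noteq> v" for u v
  proof -
    define w where "w = (\<lambda>i. u i - v i)"
    have "\<exists>i<m. w i \<noteq> 0"
    proof (rule ccontr)
      assume "\<not> (\<exists>i<m. w i \<noteq> 0)"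
      then have "\<forall>i<m. u i = v i" unfolding w_def by auto
      moreover have "\<forall>i\<ge>m. u i = v i" using uv by (simp add: rvec_def)
      ultimately have "u = v" by (metis not_le ext)
      then show False using uv by simp
    qed
    then obtain i where i: "i < m" "w i \<noteq> 0" by blast
    have D: "0 < pnorm p m w" using pnorm_pos[OF p, of i m w] i by simp
    define v' where "v' = mat_vec m A w"
    have fe: "(\<lambda>h. (pnorm p m (\<lambda>i. u i - v i + h * (f u i - f v i)) / pnorm p m (\<lambda>i. u i - v i) - 1) / h)
       = (\<lambda>h. (pnorm p m (\<lambda>i. w i + h * v' i) / pnorm p m w - 1) / h)"
      unfolding f_def w_def v'_def mat_vec_diff by simp
    have lim: "((\<lambda>h. (pnorm p m (\<lambda>i. w i + h * v' i) / pnorm p m w - 1) / h) \<longlongrightarrow>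
     Inf ((\<lambda>h. (pnorm p m (\<lambda>i. w i + h * v' i) / pnorm p m w - 1) / h) ` {0<..})) (at_right 0)"
      by (rule quot_lim[OF p D])
    have ev: "eventually (\<lambda>h. (pnorm p m (\<lambda>i. w i + h * v' i) / pnorm p m w - 1) / h \<le> 0) (at_right 0)"
    proof -
      have "eventually (\<lambda>h. h \<in> {0<..<h0}) (at_right (0::real))" using h0 by (rule eventually_at_right_real)
      then show ?thesis
      proof (rule eventually_mono)
        fix h assume "h \<in> {0<..<h0}"
        then have h: "0 < h" "h < h0" by auto
        have "pnorm p m (\<lambda>i. w i + h * v' i) \<le> pnorm p m w" unfolding v'_def by (rule contr[OF h])
        then have "pnorm p m (\<lambda>i. w i + h * v' i) / pnorm p m w \<le> 1" using D by simp
        then show "(pnorm p m (\<lambda>i. w i + h * v' i) / pnorm p m w - 1) / h \<le> 0"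
          using h by (simp add: divide_nonpos_pos)
      qed
    qed
    have "Inf ((\<lambda>h. (pnorm p m (\<lambda>i. w i + h * v' i) / pnorm p m w - 1) / h) ` {0<..}) \<le> 0"
      by (rule tendsto_upperbound[OF lim ev]) simp
    then show ?thesis unfolding fe using tendsto_Lim[OF _ lim] by simp
  qed
  define u0 where "u0 = (\<lambda>i::nat. if i < m then (1::real) else 0)"
  define v0 where "v0 = (\<lambda>i::nat. (0::real))"
  have fu0: "f u0 i = 0" for i
    unfolding f_def mat_vec_def u0_def using Arow by (auto simp: if_distrib cong: if_cong)
  have fv0: "f v0 i = 0" for i
    unfolding f_def mat_vec_def v0_def by simp
  have u0pos: "0 < pnorm p m (\<lambda>i. u0 i - v0 i)"
    using pnorm_pos[OF p, of 0 m "\<lambda>i. u0 i - v0 i"] m1 unfolding u0_def v0_def by simp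
  have zero: "Lim (at_right 0) (\<lambda>h. (pnorm p m (\<lambda>i. u0 i - v0 i + h * (f u0 i - f v0 i))
                 / pnorm p m (\<lambda>i. u0 i - v0 i) - 1) / h) = 0"
    unfolding fu0 fv0 using u0pos by (simp add: tendsto_Lim)
  have mem: "(u0, v0) \<in> {(u, v). u \<in> rvec m \<and> v \<in> rvec m \<and> u \<noteq> v}"
    using m1 unfolding u0_def v0_def rvec_def by (auto simp: fun_eq_iff intro!: exI[of _ 0])
  have "logLip_sup p m f = 0"
    unfolding logLip_sup_def
  proof (rule antisym)
    show "(SUP uv\<in>{(u, v). u \<in> rvec m \<and> v \<in> rvec m \<and> u \<noteq> v}.
        ereal (Lim (at_right 0) (\<lambda>h. (pnorm p m (\<lambda>i. fst uv i - snd uv i + h * (f (fst uv) i - f (snd uv) i))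
                 / pnorm p m (\<lambda>i. fst uv i - snd uv i) - 1) / h))) \<le> 0"
      using upper by (intro SUP_least) auto
    show "0 \<le> (SUP uv\<in>{(u, v). u \<in> rvec m \<and> v \<in> rvec m \<and> u \<noteq> v}.
        ereal (Lim (at_right 0) (\<lambda>h. (pnorm p m (\<lambda>i. fst uv i - snd uv i + h * (f (fst uv) i - f (snd uv) i))
                 / pnorm p m (\<lambda>i. fst uv i - snd uv i) - 1) / h)))"
      by (rule SUP_upper2[OF mem]) (simp add: zero)
  qed
  then show ?thesis unfolding f_def m_def A_def .
qed

end
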